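(* Let $\alpha_1, \alpha_2 \in \mathbb{R}$ be the two roots of an irreducible quadratic polynomial in $\mathbb{Q}[x]$ with $0 < \alpha_1 < 1 < \alpha_2$, and let $M' = \big\{ \sum_{i \in I} c_i (\alpha_1^i, \alpha_2^i) \mid c_i \in \mathbb{N}_0,\ I \subseteq \mathbb{Z},\ |I| < \infty \big\} \subseteq \mathbb{R}^2$. If $(v_1,v_2) \in M'$, then the set $M' \cap ([0,v_1] \times [0,v_2])$ is finite.
   Context: $M'$ is the image of $M_{\alpha_1} = \{f(\alpha_1) \mid f \in \mathbb{N}_0[x,x^{-1}]\}$ under the $\mathbb{Q}$-algebra embedding $\mathbb{Q}(\alpha_1) \to \mathbb{R}^2$, $x \mapsto (\sigma_1(x),\sigma_2(x))$, where $\sigma_i$ sends $\alpha_1 \mapsto \alpha_i$. *)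

theory Defs
  imports "HOL-Analysis.Analysis" "HOL-Computational_Algebra.Polynomial"
begin

definition Mprime :: "real \<Rightarrow> real \<Rightarrow> (real \<times> real) set" where
  "Mprime a1 a2 = {(\<Sum>i\<in>I. of_nat (c i) * a1 powi i, \<Sum>i\<in>I. of_nat (c i) * a2 powi i) |
      (I :: int set) (c :: int \<Rightarrow> nat). finite I}"

end

theory Submission
  imports Defs
begin

lemma sum_restrict_box:
  fixes c :: "int \<Rightarrow> nat" and a :: real
  assumes "finite I" and "\<forall>i\<in>I. i \<notin> J \<longrightarrow> c i = 0" and "finite J"
  shows "(\<Sum>i\<in>I. of_nat (c i) * a powi i) =
         (\<Sum>i\<in>J. of_nat (if i \<in> I \<and> i \<in> J then c i else 0) * a powi i)"
proof -
  have "(\<Sum>i\<in>I. of_nat (c i) * a powi i) = (\<Sum>i\<in>I \<inter> J. of_nat (c i) * a powi i)"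
    by (rule sum.mono_neutral_right) (use assms in auto)
  also have "\<dots> = (\<Sum>i\<in>J. of_nat (if i \<in> I \<and> i \<in> J then c i else 0) * a powi i)"
    by (rule sum.mono_neutral_cong_left) (use assms in auto)
  finally show ?thesis .
qed

lemma term_le:
  fixes c :: "int \<Rightarrow> nat" and a :: real
  assumes "finite I" "i \<in> I" "0 < a"
  shows "of_nat (c i) * a powi i \<le> (\<Sum>i\<in>I. of_nat (c i) * a powi i)"
  by (rule member_le_sum) (use assms in auto)

theorem lemma4p6:
  fixes p :: "rat poly" and a1 a2 v1 v2 :: real
  assumes "degree p = 2" and "irreducible p"
    and "poly (map_poly of_rat p) a1 = 0" and "poly (map_poly of_rat p) a2 = 0"
    and "a1 \<noteq> a2"
    and "0 < a1" and "a1 < 1" and "1 < a2"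
    and "(v1, v2) \<in> Mprime a1 a2"
  shows "finite (Mprime a1 a2 \<inter> ({0..v1} \<times> {0..v2}))"
proof -
  have ia: "1 < inverse a1" using assms(6,7) by (simp add: one_less_inverse)
  obtain N1 where N1: "v2 < a2 ^ N1" using real_arch_pow[OF assms(8)] by blast
  obtain N2 where N2: "v1 < inverse a1 ^ N2" using real_arch_pow[OF ia] by blast
  define N where "N = max N1 N2"
  have hN1: "v2 < a2 ^ n" if "N \<le> n" for n
  proof -
    have "a2 ^ N1 \<le> a2 ^ n" using that assms(8) unfolding N_def by (intro power_increasing) auto
    then show ?thesis using N1 by linarith
  qed
  have hN2: "v1 < inverse a1 ^ n" if "N \<le> n" for n
  proof -
    have "inverse a1 ^ N2 \<le> inverse a1 ^ n" using that ia unfolding N_def by (intro power_increasing) auto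
    then show ?thesis using N2 by linarith
  qed
  define J where "J = {- int N..int N}"
  define B where "B = nat \<lceil>max v1 v2\<rceil>"
  define F where "F = {c::int\<Rightarrow>nat. \<forall>i. (i \<in> J \<longrightarrow> c i \<in> {0..B}) \<and> (i \<notin> J \<longrightarrow> c i = 0)}"
  have finJ: "finite J" unfolding J_def by simp
  have finF: "finite F" unfolding F_def by (rule finite_set_of_finite_funs) (use finJ in auto)
  have "Mprime a1 a2 \<inter> ({0..v1} \<times> {0..v2}) \<subseteq>
     (\<lambda>c. (\<Sum>i\<in>J. of_nat (c i) * a1 powi i, \<Sum>i\<in>J. of_nat (c i) * a2 powi i)) ` F"
  proof
    fix z assume z: "z \<in> Mprime a1 a2 \<inter> ({0..v1} \<times> {0..v2})"
    then obtain I c where I: "finite I"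
      and zeq: "z = (\<Sum>i\<in>I. of_nat (c i) * a1 powi i, \<Sum>i\<in>I. of_nat (c i) * a2 powi i)"
      unfolding Mprime_def by blast
    have x: "(\<Sum>i\<in>I. of_nat (c i) * a1 powi i) \<le> v1" and y: "(\<Sum>i\<in>I. of_nat (c i) * a2 powi i) \<le> v2"
      using z zeq by auto
    have t1: "of_nat (c i) * a1 powi i \<le> v1" if "i \<in> I" for i
      using term_le[OF I that assms(6), of c] x by linarith
    have t2: "of_nat (c i) * a2 powi i \<le> v2" if "i \<in> I" for i
      using term_le[OF I that, of a2 c] assms(8) x y by linarith
    have h0: "\<forall>i\<in>I. i \<notin> J \<longrightarrow> c i = 0"
    proof (intro ballI impI, rule ccontr)
      fix i assume iI: "i \<in> I" and iJ: "i \<notin> J" and ci: "c i \<noteq> 0"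
      have c1: "(1::real) \<le> of_nat (c i)" using ci by simp
      show False
      proof (cases "i > 0")
        case True
        then have "N \<le> nat i" using iJ unfolding J_def by auto
        then have "v2 < a2 ^ nat i" by (rule hN1)
        moreover have "a2 powi i = a2 ^ nat i" using True by (simp add: power_int_def)
        moreover have "a2 ^ nat i \<le> of_nat (c i) * a2 ^ nat i"
          using c1 assms(8) by (simp add: mult_le_cancel_right1)
        ultimately show False using t2[OF iI] by simp
      next
        case False
        then have "N \<le> nat (-i)" using iJ unfolding J_def by auto
        then have "v1 < inverse a1 ^ nat (-i)" by (rule hN2)
        moreover have "a1 powi i = inverse a1 ^ nat (-i)" using False
          by (simp add: power_int_def power_inverse)
        moreover have "inverse a1 ^ nat (-i) \<le> of_nat (c i) * inverse a1 ^ nat (-i)"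
          using c1 assms(6) by (simp add: mult_le_cancel_right1)
        ultimately show False using t1[OF iI] by simp
      qed
    qed
    have hB: "c i \<le> B" if iI: "i \<in> I" for i
    proof -
      have "real (c i) \<le> max v1 v2"
      proof (cases "i \<ge> 0")
        case True
        have "1 \<le> a2 powi i" using True assms(8) by (simp add: power_int_def one_le_power)
        then have "real (c i) \<le> of_nat (c i) * a2 powi i" by (simp add: mult_le_cancel_left1)
        then show ?thesis using t2[OF iI] by linarith
      next
        case False
        have "a1 ^ nat (-i) \<le> 1" using assms(6,7) by (simp add: power_le_one)
        moreover have "0 < a1 ^ nat (-i)" using assms(6) by simp
        ultimately have "1 \<le> inverse (a1 ^ nat (-i))" by (simp add: one_le_inverse)
        then have "1 \<le> a1 powi i" using False by (simp add: power_int_def power_inverse)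
        then have "real (c i) \<le> of_nat (c i) * a1 powi i" by (simp add: mult_le_cancel_left1)
        then show ?thesis using t1[OF iI] by linarith
      qed
      then show ?thesis unfolding B_def by linarith
    qed
    define c' where "c' = (\<lambda>i. if i \<in> I \<and> i \<in> J then c i else 0)"
    have "c' \<in> F" unfolding F_def c'_def using hB by auto
    moreover have "z = (\<Sum>i\<in>J. of_nat (c' i) * a1 powi i, \<Sum>i\<in>J. of_nat (c' i) * a2 powi i)"
      unfolding zeq c'_def using sum_restrict_box[OF I h0 finJ] by simp
    ultimately show "z \<in> (\<lambda>c. (\<Sum>i\<in>J. of_nat (c i) * a1 powi i, \<Sum>i\<in>J. of_nat (c i) * a2 powi i)) ` F"
      by blast
  qed
  then show ?thesis using finF finite_subset by blast
qed

end
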